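(* Let $a=(a_i)_{i\in\mathbb Z}$ be any sequence of complex numbers and $\widehat a$ its dual sequence. Then, with $H(u)=1+\sum_{k\ge1}h_ku^{-k}$ and $E(v)=1+\sum_{k\ge1}e_kv^{-k}$, $$1+(u+v)\sum_{p,q=0}^\infty\frac{s_{(p\mid q);a}}{(u-a_1)\cdots(u-a_{p+1})(v-\widehat a_1)\cdots(v-\widehat a_{q+1})}=H(u)E(v),$$ where $(p\mid q)$ is the hook diagram with Frobenius coordinates $p,q$ (i.e. the partition $(p+1,1^q)$), and both sides are regarded as formal series in $u^{-1},v^{-1}$ with coefficients in $\Lambda$.
   Context: $\Lambda$ is the algebra of symmetric functions over $\mathbb C$ with complete homogeneous $h_k$ and elementary $e_k$. For a sequence $a=(a_i)_{i\in\mathbb Z}$ define $h_{k;a}=\sum_{i=1}^k(-1)^{k-i}e_{k-i}(a_1,\dots,a_{k-1})h_i$ for $k\ge1$, $h_{0;a}=1$, $h_{k;a}=0$ for $k<0$; let $(\tau^ra)_i=a_{i+r}$; and set $s_{\mu;a}=\det[h_{\mu_i-i+j;\,\tau^{1-j}a}]_{i,j=1}^N$ for any $N\ge\ell(\mu)$. The dual sequence is $\widehat a_i=-a_{1-i}$. *)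

theory Defs
  imports "HOL-Library.Poly_Mapping" "HOL-Library.Groups_Big_Fun"
    "HOL-Computational_Algebra.Formal_Laurent_Series"
    "Jordan_Normal_Form.Determinant"
begin

text \<open>Lambda is realised as the polynomial ring C[h_1, h_2, ...] in the
  algebraically independent complete homogeneous symmetric functions
  (variable number k stands for h_k).\<close>

type_synonym sym = "(nat \<Rightarrow>\<^sub>0 nat) \<Rightarrow>\<^sub>0 complex"

definition cst :: "complex \<Rightarrow> sym" where
  "cst c = Poly_Mapping.single 0 c"

definition hh :: "nat \<Rightarrow> sym" where
  "hh k = (if k = 0 then 1 else Poly_Mapping.single (Poly_Mapping.single k 1) 1)"

text \<open>Generating series H(t) = sum h_k t^k, and E(t) = sum e_k t^k defined by
  E(t) H(-t) = 1 (Macdonald (2.6)).\<close>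

definition Hser :: "sym fps" where
  "Hser = Abs_fps hh"

definition Eser :: "sym fps" where
  "Eser = fps_right_inverse (Abs_fps (\<lambda>n. (-1)^n * hh n)) 1"

definition ee :: "nat \<Rightarrow> sym" where
  "ee n = Eser $ n"

definition esym :: "nat \<Rightarrow> nat \<Rightarrow> (int \<Rightarrow> complex) \<Rightarrow> complex" where
  "esym j n a = (\<Sum>S\<in>{S. S \<subseteq> {1..n} \<and> card S = j}. \<Prod>i\<in>S. a (int i))"

definition hfac :: "int \<Rightarrow> (int \<Rightarrow> complex) \<Rightarrow> sym" where
  "hfac k a = (if k < 0 then 0 else if k = 0 then 1 else
     (\<Sum>i=1..nat k. cst ((-1)^(nat k - i) * esym (nat k - i) (nat k - 1) a) * hh i))"

definition tau :: "int \<Rightarrow> (int \<Rightarrow> complex) \<Rightarrow> (int \<Rightarrow> complex)" where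
  "tau r a = (\<lambda>i. a (i + r))"

definition dual :: "(int \<Rightarrow> complex) \<Rightarrow> (int \<Rightarrow> complex)" where
  "dual a = (\<lambda>i. - a (1 - i))"

text \<open>s_{mu;a} for a partition mu given as the list of its (positive) parts,
  using N = length mu (0-based indices i, j correspond to i+1, j+1).\<close>
definition schur_fac :: "nat list \<Rightarrow> (int \<Rightarrow> complex) \<Rightarrow> sym" where
  "schur_fac mu a = det (mat (length mu) (length mu)
     (\<lambda>(i, j). hfac (int (mu ! i) - int i + int j) (tau (- int j) a)))"

definition hook :: "nat \<Rightarrow> nat \<Rightarrow> nat list" where
  "hook p q = Suc p # replicate q 1"

text \<open>Two-variable series: outer variable x = u^{-1}, inner variable y = v^{-1}.
  Power series live in sym fps fps, Laurent series in sym fls fls.\<close>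

text \<open>Expansion of 1/(u - c) = x/(1 - c x) in x = u^{-1}.\<close>
definition inv_lin :: "complex \<Rightarrow> sym fps" where
  "inv_lin c = fps_X * fps_right_inverse (1 - fps_const (cst c) * fps_X) 1"

definition inU :: "sym fps \<Rightarrow> sym fps fps" where
  "inU f = Abs_fps (\<lambda>m. fps_const (f $ m))"

definition inV :: "sym fps \<Rightarrow> sym fps fps" where
  "inV f = fps_const f"

definition emb2 :: "sym fps fps \<Rightarrow> sym fls fls" where
  "emb2 F = fps_to_fls (Abs_fps (\<lambda>m. fps_to_fls (F $ m)))"

definition uvar :: "sym fls fls" where
  "uvar = fls_X_inv"

definition vvar :: "sym fls fls" where
  "vvar = fls_const fls_X_inv"

definition fsum2 :: "(nat \<times> nat \<Rightarrow> sym fps fps) \<Rightarrow> sym fps fps" where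
  "fsum2 T = Abs_fps (\<lambda>m. Abs_fps (\<lambda>n. Sum_any (\<lambda>pq. T pq $ m $ n)))"

definition hook_term :: "(int \<Rightarrow> complex) \<Rightarrow> nat \<times> nat \<Rightarrow> sym fps fps" where
  "hook_term a pq = (case pq of (p, q) \<Rightarrow>
     fps_const (fps_const (schur_fac (hook p q) a))
     * inU (\<Prod>i=1..p+1. inv_lin (a (int i)))
     * inV (\<Prod>j=1..q+1. inv_lin (dual a (int j))))"

end

theory Submission
  imports Defs
begin

lemma cst_add: "cst (x + y) = cst x + cst y" by (simp add: cst_def single_add)
lemma cst_diff: "cst (x - y) = cst x - cst y" by (simp add: cst_def single_diff)
lemma cst_uminus: "cst (- x) = - cst x" by (simp add: cst_def single_uminus)
lemma cst_mult: "cst (x * y) = cst x * cst y" by (simp add: cst_def mult_single)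
lemma cst_one[simp]: "cst 1 = 1" by (simp add: cst_def)
lemma cst_zero[simp]: "cst 0 = 0" by (simp add: cst_def)

lemma tau_tau: "tau r (tau s b) = tau (r + s) b"
  by (simp add: tau_def fun_eq_iff ac_simps)
lemma tau_0[simp]: "tau 0 b = b" by (simp add: tau_def)
lemma tau_app: "tau r b i = b (i + r)" by (simp add: tau_def)

lemma hfac_neg: "k < 0 \<Longrightarrow> hfac k b = 0" by (simp add: hfac_def)
lemma hfac_0[simp]: "hfac 0 b = 1" by (simp add: hfac_def)
lemma hfac_1: "hfac 1 b = hh 1"
proof -
  have "{S. S \<subseteq> {1..0::nat} \<and> card S = 0} = {{}}" by auto
  then show ?thesis by (simp add: hfac_def esym_def)
qed

definition hookmat :: "nat \<Rightarrow> nat \<Rightarrow> (int \<Rightarrow> complex) \<Rightarrow> sym mat" where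
  "hookmat p q b = mat (Suc q) (Suc q)
     (\<lambda>(i, j). hfac ((if i = 0 then int p + 1 else 1) - int i + int j) (tau (- int j) b))"

definition sh :: "nat \<Rightarrow> nat \<Rightarrow> (int \<Rightarrow> complex) \<Rightarrow> sym" where
  "sh p q b = det (hookmat p q b)"

lemma schur_hook: "schur_fac (hook p q) b = sh p q b"
proof -
  have "mat (length (hook p q)) (length (hook p q))
     (\<lambda>(i, j). hfac (int (hook p q ! i) - int i + int j) (tau (- int j) b)) = hookmat p q b"
    by (rule eq_matI) (auto simp: hookmat_def hook_def nth_Cons' ac_simps)
  then show ?thesis by (simp add: schur_fac_def sh_def)
qed

lemma sh_0: "sh p 0 b = hfac (int p + 1) b"
  by (simp add: sh_def det_single hookmat_def)

lemma sh_rec: "sh p (Suc q) b = hfac (int p + 1) b * sh 0 q (tau (-1) b) - sh (Suc p) q (tau (-1) b)"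
proof -
  let ?A = "hookmat p (Suc q) b"
  have A: "?A \<in> carrier_mat (Suc (Suc q)) (Suc (Suc q))" by (simp add: hookmat_def)
  have d0: "mat_delete ?A 0 0 = hookmat 0 q (tau (-1) b)"
    by (rule eq_matI) (auto simp: hookmat_def mat_delete_def tau_tau algebra_simps)
  have d1: "mat_delete ?A (Suc 0) 0 = hookmat (Suc p) q (tau (-1) b)"
    by (rule eq_matI) (auto simp: hookmat_def mat_delete_def tau_tau algebra_simps)
  have z: "(\<Sum>i<q. ?A $$ (Suc (Suc i), 0) * cofactor ?A (Suc (Suc i)) 0) = 0"
    by (rule sum.neutral) (auto simp: hookmat_def hfac_neg)
  have "det ?A = (\<Sum>i<Suc (Suc q). ?A $$ (i,0) * cofactor ?A i 0)"
    by (rule laplace_expansion_column[OF A]) simp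
  also have "\<dots> = ?A $$ (0,0) * cofactor ?A 0 0 + ?A $$ (1,0) * cofactor ?A 1 0"
    by (simp only: sum.lessThan_Suc_shift z) simp
  also have "\<dots> = hfac (int p + 1) b * sh 0 q (tau (-1) b) - sh (Suc p) q (tau (-1) b)"
    by (simp add: cofactor_def d0 d1 sh_def) (simp add: hookmat_def)
  finally show ?thesis by (simp add: sh_def)
qed

lemma cst_pow: "cst (x ^ n) = cst x ^ n" by (induct n) (simp_all add: cst_mult)
lemma cst_sum: "cst (sum f A) = (\<Sum>x\<in>A. cst (f x))"
  by (induct A rule: infinite_finite_induct) (simp_all add: cst_add)
lemma cst_prod: "cst (prod f A) = (\<Prod>x\<in>A. cst (f x))"
  by (induct A rule: infinite_finite_induct) (simp_all add: cst_mult)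
lemma cst_neg1_pow: "cst ((-1) ^ n) = (-1) ^ n" by (simp add: cst_pow cst_uminus)

definition lin :: "complex \<Rightarrow> sym fps" where
  "lin c = 1 - fps_const (cst c) * fps_X"

definition Qp :: "nat \<Rightarrow> (int \<Rightarrow> complex) \<Rightarrow> sym fps" where
  "Qp n b = (\<Prod>i=1..n. lin (b (int i)))"

lemma esym_big: "n < m \<Longrightarrow> esym m n b = 0"
proof -
  assume "n < m"
  have eq: "{S. S \<subseteq> {1..n} \<and> card S = m} = {}"
  proof -
    have "card S \<noteq> m" if "S \<subseteq> {1..n}" for S
    proof -
      have "card S \<le> n" using card_mono[of "{1..n}" S] that by simp
      with \<open>n < m\<close> show ?thesis by simp
    qed
    then show ?thesis by auto
  qed
  show ?thesis unfolding esym_def eq by simp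
qed

lemma Qp_nth: "Qp n b $ m = (-1)^m * cst (esym m n b)"
proof -
  let ?g = "\<lambda>i. fps_const (- cst (b (int i))) * fps_X"
  have pg: "prod ?g S = fps_const ((-1)^card S * cst (\<Prod>i\<in>S. b (int i))) * fps_X ^ card S"
    if "finite S" for S :: "nat set"
    using that
  proof (induct S rule: finite_induct)
    case (insert x F)
    have "prod ?g (insert x F) = ?g x * prod ?g F" using insert by simp
    also have "\<dots> = fps_const (- cst (b (int x))) * fps_const ((-1)^card F * cst (\<Prod>i\<in>F. b (int i))) * (fps_X * fps_X ^ card F)"
      using insert by (simp add: mult_ac)
    also have "fps_const (- cst (b (int x))) * fps_const ((-1)^card F * cst (\<Prod>i\<in>F. b (int i)))
       = fps_const (- (cst (b (int x)) * ((-1)^card F * cst (\<Prod>i\<in>F. b (int i)))))"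
      by (simp only: fps_const_mult mult_minus_left)
    also have "- (cst (b (int x)) * ((-1)^card F * cst (\<Prod>i\<in>F. b (int i))))
       = (-1)^card (insert x F) * cst (\<Prod>i\<in>insert x F. b (int i))"
      using insert by (simp add: cst_mult)
    finally show ?case using insert by simp
  qed simp
  have "Qp n b = (\<Prod>i\<in>{1..n}. ?g i + 1)" by (simp add: Qp_def lin_def fps_const_neg[symmetric] del: fps_const_neg)
  also have "\<dots> = (\<Sum>S\<in>Pow {1..n}. prod ?g S * prod (\<lambda>_. 1) ({1..n} - S))"
    by (rule prod_add[of "{1..n}" ?g "\<lambda>_. 1"]) simp
  also have "\<dots> = (\<Sum>S\<in>Pow {1..n}. fps_const ((-1)^card S * cst (\<Prod>i\<in>S. b (int i))) * fps_X ^ card S)"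
    by (rule sum.cong) (auto intro!: pg intro: finite_subset)
  finally have "Qp n b $ m = (\<Sum>S\<in>Pow {1..n}. if card S = m then (-1)^m * cst (\<Prod>i\<in>S. b (int i)) else 0)"
    by (simp add: fps_sum_nth mult.commute[of "fps_const _"] fps_X_power_mult_right_nth cong: if_cong)
       (rule sum.cong, auto)
  also have "\<dots> = (\<Sum>S\<in>{S \<in> Pow {1..n}. card S = m}. (-1)^m * cst (\<Prod>i\<in>S. b (int i)))"
    by (rule sum.inter_filter[symmetric]) simp
  also have "{S \<in> Pow {1..n}. card S = m} = {S. S \<subseteq> {1..n} \<and> card S = m}" by auto
  finally show ?thesis by (simp add: esym_def cst_sum cst_prod sum_distrib_left)
qed

lemma Hser_nth: "Hser $ n = hh n" by (simp add: Hser_def)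

lemma hfac_Qp:
  assumes "1 \<le> k"
  shows "hfac (int k) b = (Qp (k - 1) b * Hser) $ k"
proof -
  have "(Qp (k - 1) b * Hser) $ k = (\<Sum>i=0..k. Qp (k - 1) b $ i * hh (k - i))"
    by (simp add: fps_mult_nth Hser_nth)
  also have "\<dots> = (\<Sum>i=0..k. Qp (k - 1) b $ (k - i) * hh i)"
    by (subst sum.atLeastAtMost_rev) (rule sum.cong, auto)
  also have "\<dots> = Qp (k - 1) b $ k * hh 0 + (\<Sum>i=1..k. Qp (k - 1) b $ (k - i) * hh i)"
    by (subst sum.atLeast_Suc_atMost) simp_all
  also have "Qp (k - 1) b $ k = 0" using assms by (simp add: Qp_nth esym_big)
  also have "(\<Sum>i=1..k. Qp (k - 1) b $ (k - i) * hh i)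
     = (\<Sum>i=1..k. cst ((-1) ^ (k - i) * esym (k - i) (k - 1) b) * hh i)"
    by (rule sum.cong) (simp_all add: Qp_nth cst_mult cst_neg1_pow)
  finally show ?thesis using assms by (simp add: hfac_def)
qed

lemma Qp_Suc: "Qp (Suc m) b = Qp m b * lin (b (int (Suc m)))"
  by (simp add: Qp_def)

lemma Qp_shift: "Qp (Suc m) (tau (-1) b) = lin (b 0) * Qp m b"
proof -
  have "Qp (Suc m) (tau (-1) b) = (\<Prod>i=Suc 0..Suc m. lin (b (int i - 1)))"
    by (simp add: Qp_def tau_app)
  also have "\<dots> = (\<Prod>i=0..m. lin (b (int i)))"
    by (subst prod.shift_bounds_cl_Suc_ivl) simp
  also have "\<dots> = lin (b 0) * (\<Prod>i=Suc 0..m. lin (b (int i)))"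
    by (subst prod.atLeast_Suc_atMost) simp_all
  finally show ?thesis by (simp add: Qp_def)
qed

lemma hshift_nat: "hfac (int m + 2) (tau (-1) b)
   = hfac (int m + 2) b + cst (b (int m + 1) - b 0) * hfac (int m + 1) b"
proof -
  let ?k = "Suc (Suc m)"
  have h1: "hfac (int m + 2) c = (Qp (Suc m) c * Hser) $ ?k" for c
    using hfac_Qp[of ?k c] by (simp add: ac_simps)
  have h2: "hfac (int m + 1) c = (Qp m c * Hser) $ Suc m" for c
    using hfac_Qp[of "Suc m" c] by (simp add: ac_simps)
  have "hfac (int m + 2) (tau (-1) b) - hfac (int m + 2) b
      = ((Qp (Suc m) (tau (-1) b) - Qp (Suc m) b) * Hser) $ ?k"
    unfolding h1 by (simp only: fps_sub_nth ring_distribs)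
  also have "Qp (Suc m) (tau (-1) b) - Qp (Suc m) b
      = fps_const (cst (b (int m + 1) - b 0)) * (fps_X * Qp m b)"
    unfolding Qp_shift Qp_Suc[of m b] lin_def
    by (simp add: algebra_simps cst_diff fps_const_sub[symmetric] del: fps_const_sub)
  also have "(fps_const (cst (b (int m + 1) - b 0)) * (fps_X * Qp m b) * Hser) $ ?k
      = cst (b (int m + 1) - b 0) * (Qp m b * Hser) $ Suc m"
    by (simp add: mult.assoc)
  also have "(Qp m b * Hser) $ Suc m = hfac (int m + 1) b"
    by (simp add: h2)
  finally show ?thesis by (simp add: algebra_simps)
qed

lemma hshift: "hfac k (tau (-1) b) = hfac k b + cst (b (k - 1) - b 0) * hfac (k - 1) b"
proof (cases "k < 2")
  case True
  then consider "k < 0" | "k = 0" | "k = 1" by linarith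
  then show ?thesis
    by cases (simp_all add: hfac_neg hfac_1)
next
  case False
  define m where "m = nat (k - 2)"
  have k: "k = int m + 2" using False by (simp add: m_def)
  have "k - 1 = int m + 1" using k by simp
  then show ?thesis using hshift_nat[of m b] k by (simp add: ac_simps)
qed

lemma sh_0_0: "sh 0 0 b = hh 1" by (simp add: sh_0 hfac_1)

lemma pieri: "sh p (Suc q) b + sh (Suc p) q b + cst (b (int p + 1) - b (- int q)) * sh p q b
    = hfac (int p + 1) b * sh 0 q b"
proof (induct q arbitrary: p b)
  case 0
  let ?c = "tau (-1) b"
  have r: "sh p (Suc 0) b = hfac (int p + 1) b * hh 1 - hfac (int p + 2) ?c"
    using sh_rec[of p 0 b] by (simp add: sh_0 hfac_1 ac_simps)
  have hs: "hfac (int p + 2) ?c = hfac (int p + 2) b + cst (b (int p + 1) - b 0) * hfac (int p + 1) b"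
    using hshift[of "int p + 2" b] by (simp add: ac_simps)
  show ?case using r hs by (simp add: sh_0 hfac_1 ac_simps algebra_simps)
next
  case (Suc q)
  let ?c = "tau (-1) b"
  have R1: "sh p (Suc (Suc q)) b = hfac (int p + 1) b * sh 0 (Suc q) ?c - sh (Suc p) (Suc q) ?c"
    by (rule sh_rec)
  have R2: "sh (Suc p) (Suc q) b = hfac (int p + 2) b * sh 0 q ?c - sh (Suc (Suc p)) q ?c"
    using sh_rec[of "Suc p" q b] by (simp add: ac_simps)
  have R3: "sh p (Suc q) b = hfac (int p + 1) b * sh 0 q ?c - sh (Suc p) q ?c"
    by (rule sh_rec)
  have R4: "sh 0 (Suc q) b = hh 1 * sh 0 q ?c - sh 1 q ?c"
    using sh_rec[of 0 q b] by (simp add: hfac_1)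
  have c1: "?c (int p + 2) = b (int p + 1)" by (simp add: tau_app ac_simps)
  have c2: "?c (- int q) = b (- 1 - int q)" by (simp add: tau_app algebra_simps)
  have c3: "?c 1 = b 0" by (simp add: tau_app)
  have I1: "sh (Suc p) (Suc q) ?c = hfac (int p + 2) ?c * sh 0 q ?c - sh (Suc (Suc p)) q ?c
      - cst (b (int p + 1) - b (- 1 - int q)) * sh (Suc p) q ?c"
    using Suc[of "Suc p" ?c] by (simp add: c1 c2 algebra_simps)
  have I2: "sh 0 (Suc q) ?c = hh 1 * sh 0 q ?c - sh 1 q ?c
      - cst (b 0 - b (- 1 - int q)) * sh 0 q ?c"
    using Suc[of 0 ?c] by (simp add: c2 c3 hfac_1 algebra_simps)
  have hs: "hfac (int p + 2) ?c = hfac (int p + 2) b + cst (b (int p + 1) - b 0) * hfac (int p + 1) b"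
    using hshift[of "int p + 2" b] by (simp add: ac_simps)
  show ?case
    unfolding R1 R2 R3 R4 I1 I2 hs
    by (simp add: algebra_simps cst_diff)
qed

definition Lf :: "complex \<Rightarrow> sym fps" where
  "Lf c = fps_right_inverse (1 - fps_const (cst c) * fps_X) 1"

lemma lin_Lf: "lin c * Lf c = 1"
  unfolding lin_def Lf_def by (rule fps_right_inverse) simp

lemma inv_lin_Lf: "inv_lin c = fps_X * Lf c" by (simp add: inv_lin_def Lf_def)

lemma lin_inv_lin: "lin c * inv_lin c = fps_X"
  by (simp add: inv_lin_Lf mult.left_commute[of _ fps_X] lin_Lf)

lemma inv_lin_eq: "inv_lin c = fps_X + fps_const (cst c) * fps_X * inv_lin c"
proof -
  have "fps_X = lin c * inv_lin c" by (simp add: lin_inv_lin)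
  also have "\<dots> = inv_lin c - fps_const (cst c) * fps_X * inv_lin c"
    by (simp add: lin_def algebra_simps)
  finally show ?thesis by (simp add: algebra_simps)
qed

definition Uk :: "nat \<Rightarrow> (int \<Rightarrow> complex) \<Rightarrow> sym fps" where
  "Uk k b = (\<Prod>i=1..k. inv_lin (b (int i)))"

lemma Uk_0[simp]: "Uk 0 b = 1" by (simp add: Uk_def)

lemma Uk_Suc: "Uk (Suc k) b = Uk k b * inv_lin (b (int (Suc k)))"
  by (simp add: Uk_def)

lemma QU: "Qp k b * Uk k b = fps_X ^ k"
proof (induct k)
  case (Suc k)
  have "Qp (Suc k) b * Uk (Suc k) b = (Qp k b * Uk k b) * (lin (b (int (Suc k))) * inv_lin (b (int (Suc k))))"
    by (simp add: Qp_Suc Uk_Suc mult_ac)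
  then show ?case using Suc by (simp add: lin_inv_lin)
qed (simp add: Qp_def)

lemma U1: "Uk (Suc k) b = fps_X * Uk k b + fps_const (cst (b (int (Suc k)))) * fps_X * Uk (Suc k) b"
proof -
  have "Uk (Suc k) b = Uk k b * inv_lin (b (int (Suc k)))" by (rule Uk_Suc)
  also have "\<dots> = Uk k b * (fps_X + fps_const (cst (b (int (Suc k)))) * fps_X * inv_lin (b (int (Suc k))))"
    by (subst inv_lin_eq) (rule refl)
  also have "\<dots> = fps_X * Uk k b + fps_const (cst (b (int (Suc k)))) * fps_X * (Uk k b * inv_lin (b (int (Suc k))))"
    by (simp add: algebra_simps)
  finally show ?thesis by (simp add: Uk_Suc)
qed

lemma Uk_X: "Uk k b = fps_X ^ k * (\<Prod>i=1..k. Lf (b (int i)))"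
  by (simp add: Uk_def inv_lin_Lf prod.distrib)

lemma Uk_nth_low: "n < k \<Longrightarrow> Uk k b $ n = 0"
  by (simp add: Uk_X fps_X_power_mult_nth)

definition Li :: "nat \<Rightarrow> (int \<Rightarrow> complex) \<Rightarrow> sym fps" where
  "Li k b = (\<Prod>i=1..k. Lf (b (int i)))"

lemma Li_Qp: "Li k b * Qp k b = 1"
  by (simp add: Li_def Qp_def prod.distrib[symmetric] mult.commute[of "Lf _"] lin_Lf)

lemma mult_low_zero:
  fixes F G :: "'a :: comm_ring_1 fps"
  assumes "\<forall>i\<le>k. G $ i = 0" "n \<le> k"
  shows "(F * G) $ n = 0"
  unfolding fps_mult_nth using assms by (intro sum.neutral) auto

lemma lin_mult_nth: "(lin c * W) $ n = (if n = 0 then W $ 0 else W $ n - cst c * W $ (n - 1))"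
  by (simp add: lin_def algebra_simps)

lemma QpUk_high:
  assumes "j \<le> k" "k < n"
  shows "(Qp k b * Uk j b) $ n = 0"
  using assms
proof (induct k arbitrary: n)
  case 0
  then show ?case by (simp add: Qp_def)
next
  case (Suc k)
  show ?case
  proof (cases "j = Suc k")
    case True
    then show ?thesis using Suc.prems by (simp add: QU)
  next
    case False
    then have j: "j \<le> k" using Suc.prems by simp
    have eq: "Qp (Suc k) b * Uk j b = lin (b (int (Suc k))) * (Qp k b * Uk j b)"
      by (simp add: Qp_Suc mult_ac)
    have "(Qp k b * Uk j b) $ n = 0" "(Qp k b * Uk j b) $ (n - 1) = 0"
      using Suc.hyps[OF j] Suc.prems by auto
    then show ?thesis unfolding eq lin_mult_nth by (cases n) (simp_all del: fps_mult_nth_0)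
  qed
qed

definition Dk :: "nat \<Rightarrow> (int \<Rightarrow> complex) \<Rightarrow> sym fps" where
  "Dk k b = Hser - (\<Sum>j\<le>k. fps_const (hfac (int j) b) * Uk j b)"

lemma QD: "\<forall>n\<le>k. (Qp k b * Dk k b) $ n = 0"
proof (induct k)
  case 0
  show ?case by (simp add: Dk_def Qp_def Hser_nth hh_def)
next
  case (Suc k)
  let ?W = "Qp k b * Dk k b"
  have eq: "Qp (Suc k) b * Dk (Suc k) b
      = lin (b (int (Suc k))) * ?W - fps_const (hfac (int (Suc k)) b) * fps_X ^ Suc k"
  proof -
    have "Qp (Suc k) b * Dk (Suc k) b = Qp (Suc k) b * Dk k b
        - fps_const (hfac (int (Suc k)) b) * (Qp (Suc k) b * Uk (Suc k) b)"
      by (simp add: Dk_def algebra_simps)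
    also have "Qp (Suc k) b * Dk k b = lin (b (int (Suc k))) * ?W"
      by (simp add: Qp_Suc mult_ac)
    finally show ?thesis by (simp add: QU)
  qed
  have top: "?W $ Suc k = hfac (int (Suc k)) b"
  proof -
    have "?W = Qp k b * Hser - (\<Sum>j\<le>k. fps_const (hfac (int j) b) * (Qp k b * Uk j b))"
      by (simp add: Dk_def algebra_simps sum_distrib_left)
    then have "?W $ Suc k = (Qp k b * Hser) $ Suc k
        - (\<Sum>j\<le>k. hfac (int j) b * (Qp k b * Uk j b) $ Suc k)"
      by (simp add: fps_sum_nth)
    also have "(\<Sum>j\<le>k. hfac (int j) b * (Qp k b * Uk j b) $ Suc k) = 0"
      by (rule sum.neutral) (simp add: QpUk_high)
    also have "(Qp k b * Hser) $ Suc k = hfac (int (Suc k)) b"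
      using hfac_Qp[of "Suc k" b] by simp
    finally show ?thesis by simp
  qed
  show ?case
  proof (intro allI impI)
    fix n assume n: "n \<le> Suc k"
    show "(Qp (Suc k) b * Dk (Suc k) b) $ n = 0"
    proof (cases "n = Suc k")
      case True
      then show ?thesis using Suc top by (simp add: eq lin_mult_nth)
    next
      case False
      then have "n \<le> k" using n by simp
      then have "?W $ n = 0" "?W $ (n - 1) = 0" using Suc by auto
      then show ?thesis using False n unfolding eq by (cases n) (simp_all add: lin_mult_nth del: fps_mult_nth_0)
    qed
  qed
qed

lemma Dk_low: "n \<le> k \<Longrightarrow> Dk k b $ n = 0"
proof -
  assume n: "n \<le> k"
  have "Dk k b = Li k b * (Qp k b * Dk k b)"
    by (simp add: mult.assoc[symmetric] Li_Qp)
  also have "\<dots> $ n = 0"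
    by (rule mult_low_zero[OF _ n]) (use QD in blast)
  finally show ?thesis .
qed

lemma factA: "n \<le> M \<Longrightarrow> (\<Sum>j\<le>M. fps_const (hfac (int j) b) * Uk j b) $ n = hh n"
  using Dk_low[of n M b] by (simp add: Dk_def Hser_nth)

lemma sum_shift_lt:
  fixes g :: "nat \<Rightarrow> 'a :: ab_group_add"
  shows "(\<Sum>p<M. g p) = g 0 + (\<Sum>p<M. g (Suc p)) - g M"
proof -
  have "(\<Sum>p<Suc M. g p) = (\<Sum>p<M. g p) + g M" by simp
  moreover have "(\<Sum>p<Suc M. g p) = g 0 + (\<Sum>p<M. g (Suc p))" by (rule sum.lessThan_Suc_shift)
  ultimately show ?thesis by (simp add: algebra_simps)
qed

lemma GL:
  fixes W s c :: "nat \<Rightarrow> nat \<Rightarrow> 'r :: comm_ring_1" and h e :: "nat \<Rightarrow> 'r"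
  assumes P: "\<And>p q. s p (Suc q) + s (Suc p) q + c p q * s p q = h (Suc p) * e (Suc q)"
    and h0: "h 0 = 1" and e0: "e 0 = 1" and hS: "\<And>p. h (Suc p) = s p 0"
    and eS: "\<And>q. e (Suc q) = s 0 q" and W0: "W 0 0 = 1"
  shows "(\<Sum>p<M. \<Sum>q<M. s p q * (W p (Suc q) + W (Suc p) q + c p q * W (Suc p) (Suc q)))
    = (\<Sum>m<Suc M. \<Sum>n<Suc M. h m * e n * W m n) - 1
      - ((\<Sum>q<M. s M q * W M (Suc q)) + (\<Sum>p<M. s p M * W (Suc p) M))"
proof -
  let ?T1 = "\<Sum>p<M. \<Sum>q<M. s p q * W p (Suc q)"
  let ?T2 = "\<Sum>p<M. \<Sum>q<M. s p q * W (Suc p) q"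
  let ?T3 = "\<Sum>p<M. \<Sum>q<M. c p q * s p q * W (Suc p) (Suc q)"
  let ?A = "\<Sum>p<M. \<Sum>q<M. s (Suc p) q * W (Suc p) (Suc q)"
  let ?B = "\<Sum>p<M. \<Sum>q<M. s p (Suc q) * W (Suc p) (Suc q)"
  have L: "(\<Sum>p<M. \<Sum>q<M. s p q * (W p (Suc q) + W (Suc p) q + c p q * W (Suc p) (Suc q)))
      = ?T1 + ?T2 + ?T3"
    by (simp add: distrib_left sum.distrib mult_ac)
  have T1: "?T1 = (\<Sum>q<M. s 0 q * W 0 (Suc q)) + ?A - (\<Sum>q<M. s M q * W M (Suc q))"
  proof -
    have "?T1 = (\<Sum>q<M. \<Sum>p<M. s p q * W p (Suc q))" by (rule sum.swap)
    also have "\<dots> = (\<Sum>q<M. s 0 q * W 0 (Suc q) + (\<Sum>p<M. s (Suc p) q * W (Suc p) (Suc q)) - s M q * W M (Suc q))"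
      by (rule sum.cong[OF refl]) (rule sum_shift_lt)
    also have "\<dots> = (\<Sum>q<M. s 0 q * W 0 (Suc q)) + (\<Sum>q<M. \<Sum>p<M. s (Suc p) q * W (Suc p) (Suc q))
        - (\<Sum>q<M. s M q * W M (Suc q))"
      by (simp add: sum.distrib sum_subtractf)
    also have "(\<Sum>q<M. \<Sum>p<M. s (Suc p) q * W (Suc p) (Suc q)) = ?A" by (rule sum.swap)
    finally show ?thesis .
  qed
  have T2: "?T2 = (\<Sum>p<M. s p 0 * W (Suc p) 0) + ?B - (\<Sum>p<M. s p M * W (Suc p) M)"
  proof -
    have "?T2 = (\<Sum>p<M. s p 0 * W (Suc p) 0 + (\<Sum>q<M. s p (Suc q) * W (Suc p) (Suc q)) - s p M * W (Suc p) M)"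
      by (rule sum.cong[OF refl]) (rule sum_shift_lt)
    also have "\<dots> = (\<Sum>p<M. s p 0 * W (Suc p) 0) + ?B - (\<Sum>p<M. s p M * W (Suc p) M)"
      by (simp add: sum.distrib sum_subtractf)
    finally show ?thesis .
  qed
  have R: "(\<Sum>m<Suc M. \<Sum>n<Suc M. h m * e n * W m n)
     = 1 + (\<Sum>q<M. s 0 q * W 0 (Suc q)) + (\<Sum>p<M. s p 0 * W (Suc p) 0) + (?A + ?B + ?T3)"
  proof -
    have "(\<Sum>m<Suc M. \<Sum>n<Suc M. h m * e n * W m n)
       = (\<Sum>n<Suc M. h 0 * e n * W 0 n) + (\<Sum>p<M. \<Sum>n<Suc M. h (Suc p) * e n * W (Suc p) n)"
      by (rule sum.lessThan_Suc_shift)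
    also have "(\<Sum>n<Suc M. h 0 * e n * W 0 n) = 1 + (\<Sum>q<M. s 0 q * W 0 (Suc q))"
      by (subst sum.lessThan_Suc_shift) (simp add: h0 e0 W0 eS del: sum.lessThan_Suc)
    also have "(\<Sum>p<M. \<Sum>n<Suc M. h (Suc p) * e n * W (Suc p) n)
       = (\<Sum>p<M. s p 0 * W (Suc p) 0 + (\<Sum>q<M. h (Suc p) * e (Suc q) * W (Suc p) (Suc q)))"
      by (rule sum.cong[OF refl]) (subst sum.lessThan_Suc_shift, simp add: e0 hS del: sum.lessThan_Suc)
    also have "\<dots> = (\<Sum>p<M. s p 0 * W (Suc p) 0) + (\<Sum>p<M. \<Sum>q<M. h (Suc p) * e (Suc q) * W (Suc p) (Suc q))"
      by (simp add: sum.distrib)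
    also have "(\<Sum>p<M. \<Sum>q<M. h (Suc p) * e (Suc q) * W (Suc p) (Suc q)) = ?A + ?B + ?T3"
    proof -
      have "(\<Sum>p<M. \<Sum>q<M. h (Suc p) * e (Suc q) * W (Suc p) (Suc q))
         = (\<Sum>p<M. \<Sum>q<M. (s p (Suc q) + s (Suc p) q + c p q * s p q) * W (Suc p) (Suc q))"
        by (simp only: P)
      also have "\<dots> = ?A + ?B + ?T3"
        by (simp only: distrib_right sum.distrib) (simp add: algebra_simps)
      finally show ?thesis .
    qed
    finally show ?thesis by (simp add: algebra_simps)
  qed
  show ?thesis unfolding L T1 T2 R by (simp add: algebra_simps)
qed

type_synonym T = "sym fps fps"

definition X2 :: T where "X2 = fps_X"
definition Y2 :: T where "Y2 = fps_const fps_X"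
definition cc :: "sym \<Rightarrow> T" where "cc c = fps_const (fps_const c)"

lemma fps_const_sum: "fps_const (sum f A) = (\<Sum>x\<in>A. fps_const (f x))"
  by (induct A rule: infinite_finite_induct) (simp_all add: fps_const_add[symmetric] del: fps_const_add)

lemma cc_add: "cc (x + y) = cc x + cc y" by (simp add: cc_def)
lemma cc_diff: "cc (x - y) = cc x - cc y" by (simp add: cc_def)
lemma cc_mult: "cc (x * y) = cc x * cc y" by (simp add: cc_def)
lemma cc_one[simp]: "cc 1 = 1" by (simp add: cc_def)

lemma inU_nth: "inU f $ i = fps_const (f $ i)" by (simp add: inU_def)

lemma inU_mult: "inU (f * g) = inU f * inU g"
proof (rule fps_ext)
  fix n
  show "inU (f * g) $ n = (inU f * inU g) $ n"
    by (simp add: inU_nth fps_mult_nth fps_const_sum)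
qed

lemma inU_add: "inU (f + g) = inU f + inU g"
  by (rule fps_ext) (simp add: inU_nth)
lemma inU_diff: "inU (f - g) = inU f - inU g"
  by (rule fps_ext) (simp add: inU_nth)
lemma inU_zero[simp]: "inU 0 = 0"
  by (rule fps_ext) (simp add: inU_nth)
lemma inU_sum: "inU (sum f A) = (\<Sum>x\<in>A. inU (f x))"
  by (induct A rule: infinite_finite_induct) (simp_all add: inU_add)
lemma inU_const: "inU (fps_const c) = cc c"
  by (rule fps_ext) (simp add: inU_nth cc_def)
lemma inU_one[simp]: "inU 1 = 1"
  using inU_const[of 1] by (simp add: cc_def)
lemma inU_X: "inU fps_X = X2"
  by (rule fps_ext) (simp add: inU_nth X2_def fps_X_def)

lemma inV_mult: "inV (f * g) = inV f * inV g" by (simp add: inV_def)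
lemma inV_add: "inV (f + g) = inV f + inV g" by (simp add: inV_def)
lemma inV_sum: "inV (sum f A) = (\<Sum>x\<in>A. inV (f x))" by (simp add: inV_def fps_const_sum)
lemma inV_const: "inV (fps_const c) = cc c" by (simp add: inV_def cc_def)
lemma inV_one[simp]: "inV 1 = 1" by (simp add: inV_def)
lemma inV_X: "inV fps_X = Y2" by (simp add: inV_def Y2_def)

lemma inUV_nth: "(inU f * inV g) $ i $ j = f $ i * g $ j"
  by (simp add: inV_def inU_nth)

context fixes a :: "int \<Rightarrow> complex" begin

definition Wd :: "nat \<Rightarrow> nat \<Rightarrow> T" where
  "Wd m n = inU (Uk m a) * inV (Uk n (dual a))"

lemma hook_term_Wd: "hook_term a (p, q) = cc (sh p q a) * Wd (Suc p) (Suc q)"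
  by (simp add: hook_term_def Wd_def schur_hook Uk_def cc_def mult.assoc)

lemma PT: "(X2 + Y2) * Wd (Suc p) (Suc q)
  = X2 * Y2 * (Wd p (Suc q) + Wd (Suc p) q + cc (cst (a (int p + 1) - a (- int q))) * Wd (Suc p) (Suc q))"
proof -
  let ?U = "inU (Uk (Suc p) a)" and ?V = "inV (Uk (Suc q) (dual a))"
  let ?ca = "cc (cst (a (int p + 1)))" and ?cb = "cc (cst (- a (- int q)))"
  have hU: "?U = X2 * inU (Uk p a) + ?ca * X2 * ?U"
    using arg_cong[OF U1[of p a], of inU] by (simp add: inU_add inU_mult inU_const inU_X ac_simps)
  have hV: "?V = Y2 * inV (Uk q (dual a)) + ?cb * Y2 * ?V"
    using arg_cong[OF U1[of q "dual a"], of inV] by (simp add: inV_add inV_mult inV_const inV_X dual_def ac_simps)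
  have e1: "X2 * ?U * ?V = X2 * ?U * (Y2 * inV (Uk q (dual a)) + ?cb * Y2 * ?V)"
    by (rule arg_cong[where f="\<lambda>z. X2 * ?U * z", OF hV])
  have e2: "Y2 * ?U * ?V = Y2 * (X2 * inU (Uk p a) + ?ca * X2 * ?U) * ?V"
    by (rule arg_cong[where f="\<lambda>z. Y2 * z * ?V", OF hU])
  have cab: "cc (cst (a (int p + 1) - a (- int q))) = ?ca + ?cb"
    by (simp add: cst_diff cst_add cst_uminus cc_add cc_diff cc_def)
  have "(X2 + Y2) * Wd (Suc p) (Suc q) = X2 * ?U * ?V + Y2 * ?U * ?V"
    by (simp add: Wd_def algebra_simps)
  also have "\<dots> = X2 * Y2 * (Wd p (Suc q) + Wd (Suc p) q + (?ca + ?cb) * Wd (Suc p) (Suc q))"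
    unfolding e1 e2 by (simp add: Wd_def algebra_simps)
  finally show ?thesis by (simp only: cab)
qed

definition ee :: "nat \<Rightarrow> sym" where
  "ee n = (if n = 0 then 1 else sh 0 (n - 1) a)"

definition SM :: "nat \<Rightarrow> T" where
  "SM M = (\<Sum>p<M. \<Sum>q<M. hook_term a (p, q))"
definition AM :: "nat \<Rightarrow> sym fps" where
  "AM M = (\<Sum>m<Suc M. fps_const (hfac (int m) a) * Uk m a)"
definition BM :: "nat \<Rightarrow> sym fps" where
  "BM M = (\<Sum>n<Suc M. fps_const (ee n) * Uk n (dual a))"
definition Err :: "nat \<Rightarrow> T" where
  "Err M = (\<Sum>q<M. cc (sh M q a) * Wd M (Suc q)) + (\<Sum>p<M. cc (sh p M a) * Wd (Suc p) M)"

lemma EI: "(X2 + Y2) * SM M = X2 * Y2 * ((inU (AM M) * inV (BM M) - 1) - Err M)"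
proof -
  have "(X2 + Y2) * SM M = (\<Sum>p<M. \<Sum>q<M. cc (sh p q a) * ((X2 + Y2) * Wd (Suc p) (Suc q)))"
    by (simp add: SM_def hook_term_Wd sum_distrib_left mult_ac)
  also have "\<dots> = X2 * Y2 * (\<Sum>p<M. \<Sum>q<M. cc (sh p q a) *
      (Wd p (Suc q) + Wd (Suc p) q + cc (cst (a (int p + 1) - a (- int q))) * Wd (Suc p) (Suc q)))"
    by (simp add: PT sum_distrib_left mult_ac)
  also have "(\<Sum>p<M. \<Sum>q<M. cc (sh p q a) *
      (Wd p (Suc q) + Wd (Suc p) q + cc (cst (a (int p + 1) - a (- int q))) * Wd (Suc p) (Suc q)))
    = (\<Sum>m<Suc M. \<Sum>n<Suc M. cc (hfac (int m) a) * cc (ee n) * Wd m n) - 1 - Err M"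
    unfolding Err_def
  proof (rule GL)
    fix p q
    show "cc (sh p (Suc q) a) + cc (sh (Suc p) q a) + cc (cst (a (int p + 1) - a (- int q))) * cc (sh p q a)
        = cc (hfac (int (Suc p)) a) * cc (ee (Suc q))"
      using arg_cong[OF pieri[of p q a], of cc] by (simp add: cc_add cc_mult ee_def ac_simps)
  next
    show "cc (hfac (int 0) a) = 1" by simp
  next
    show "cc (ee 0) = 1" by (simp add: ee_def)
  next
    fix p show "cc (hfac (int (Suc p)) a) = cc (sh p 0 a)" by (simp add: sh_0 ac_simps)
  next
    fix q show "cc (ee (Suc q)) = cc (sh 0 q a)" by (simp add: ee_def)
  next
    show "Wd 0 0 = 1" by (simp add: Wd_def)
  qed
  also have "(\<Sum>m<Suc M. \<Sum>n<Suc M. cc (hfac (int m) a) * cc (ee n) * Wd m n) = inU (AM M) * inV (BM M)"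
    unfolding AM_def BM_def inU_sum inV_sum sum_product
    by (simp add: inU_mult inV_mult inU_const inV_const Wd_def mult_ac del: sum.lessThan_Suc)
  finally show ?thesis by simp
qed

end

definition eqv :: "nat \<Rightarrow> T \<Rightarrow> T \<Rightarrow> bool" where
  "eqv N F G \<longleftrightarrow> (\<forall>i<N. \<forall>j<N. F $ i $ j = G $ i $ j)"

lemma nth2: "((F :: T) * G) $ i $ j = (\<Sum>k=0..i. \<Sum>l=0..j. F $ k $ l * G $ (i - k) $ (j - l))"
  by (simp add: fps_mult_nth fps_sum_nth)

lemma eqv_refl[simp]: "eqv N F F" by (simp add: eqv_def)
lemma eqv_sym: "eqv N F G \<Longrightarrow> eqv N G F" by (simp add: eqv_def)
lemma eqv_trans: "eqv N F G \<Longrightarrow> eqv N G H \<Longrightarrow> eqv N F H" by (simp add: eqv_def)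
lemma eqv_mono: "eqv K F G \<Longrightarrow> N \<le> K \<Longrightarrow> eqv N F G" by (simp add: eqv_def)
lemma eqv_add: "eqv N F F' \<Longrightarrow> eqv N G G' \<Longrightarrow> eqv N (F + G) (F' + G')"
  by (simp add: eqv_def)
lemma eqv_diff: "eqv N F F' \<Longrightarrow> eqv N G G' \<Longrightarrow> eqv N (F - G) (F' - G')"
  by (simp add: eqv_def)
lemma eqv_mult: "eqv N F F' \<Longrightarrow> eqv N G G' \<Longrightarrow> eqv N (F * G) (F' * G')"
  unfolding eqv_def nth2
  by (auto intro!: sum.cong)

lemma XY_nth: "(X2 * Y2 * F) $ i $ j = (if i = 0 \<or> j = 0 then 0 else F $ (i - 1) $ (j - 1))"
  by (simp add: X2_def Y2_def mult.assoc)

lemma cc_nth: "(cc c * F) $ i $ j = c * F $ i $ j"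
  by (simp add: cc_def)

lemma inU_eqv: "(\<And>i. i < K \<Longrightarrow> f $ i = g $ i) \<Longrightarrow> eqv K (inU f) (inU g)"
  by (simp add: eqv_def inU_nth)

lemma inV_eqv: "(\<And>j. j < K \<Longrightarrow> f $ j = g $ j) \<Longrightarrow> eqv K (inV f) (inV g)"
  by (simp add: eqv_def inV_def)

definition sig :: "nat \<Rightarrow> T \<Rightarrow> sym" where
  "sig N F = (\<Sum>m=0..N. (-1)^m * F $ m $ (N - m))"

lemma sig_eqv: "eqv K F G \<Longrightarrow> N < K \<Longrightarrow> sig N F = sig N G"
  unfolding sig_def eqv_def by (auto intro!: sum.cong)

lemma sig_diff: "sig N (F - G) = sig N F - sig N G"
  by (simp add: sig_def algebra_simps sum_subtractf)

lemma sig_XY: "sig N ((X2 + Y2) * W) = 0"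
proof (cases N)
  case 0
  then show ?thesis by (simp add: sig_def X2_def Y2_def algebra_simps)
next
  case (Suc n)
  have c: "((X2 + Y2) * W) $ m $ j = (if m = 0 then 0 else W $ (m - 1) $ j) + (if j = 0 then 0 else W $ m $ (j - 1))" for m j
    by (simp add: X2_def Y2_def algebra_simps)
  have "sig N ((X2 + Y2) * W) = (\<Sum>m=0..Suc n. (-1)^m * (if m = 0 then 0 else W $ (m - 1) $ (Suc n - m)))
      + (\<Sum>m=0..Suc n. (-1)^m * (if Suc n - m = 0 then 0 else W $ m $ (Suc n - m - 1)))"
    by (simp add: sig_def c Suc distrib_left sum.distrib)
  also have "(\<Sum>m=0..Suc n. (-1)^m * (if m = 0 then 0 else W $ (m - 1) $ (Suc n - m)))
      = (\<Sum>m=0..n. (-1)^(Suc m) * W $ m $ (n - m))"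
    by (subst sum.atLeast0_atMost_Suc_shift) simp
  also have "(\<Sum>m=0..Suc n. (-1)^m * (if Suc n - m = 0 then 0 else W $ m $ (Suc n - m - 1)))
      = (\<Sum>m=0..n. (-1)^m * W $ m $ (n - m))"
    by (subst sum.atLeast0_atMost_Suc) (auto intro!: sum.cong simp: Suc_diff_le)
  finally show ?thesis by (simp add: sum.distrib[symmetric])
qed

definition negf :: "sym fps \<Rightarrow> sym fps" where
  "negf f = Abs_fps (\<lambda>m. (-1)^m * f $ m)"

lemma sig_UV: "sig N (inU f * inV g) = (negf f * g) $ N"
  unfolding sig_def inUV_nth by (simp add: negf_def fps_mult_nth mult.assoc)

lemma negf_X_mult: "negf (fps_X * f) = - (fps_X * negf f)"
proof (rule fps_ext)
  fix n show "negf (fps_X * f) $ n = (- (fps_X * negf f)) $ n"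
    by (cases n) (simp_all add: negf_def)
qed

lemma negf_X: "negf fps_X = - fps_X"
  by (rule fps_ext) (simp add: negf_def fps_X_def)

lemma Hn_Eser: "negf Hser * Eser = 1"
proof -
  have "negf Hser = Abs_fps (\<lambda>n. (-1)^n * hh n)" by (simp add: negf_def Hser_nth)
  then show ?thesis unfolding Eser_def by (simp add: fps_right_inverse hh_def)
qed

context fixes a :: "int \<Rightarrow> complex" begin

lemma Err_small: "eqv (Suc M) (X2 * Y2 * Err a M) 0"
proof -
  have E: "Err a M $ i $ j = 0" if "i < M \<and> j < M" for i j :: nat
    using that by (auto simp: Err_def fps_sum_nth cc_nth Wd_def inUV_nth Uk_nth_low intro!: sum.neutral)
  show ?thesis
  proof (unfold eqv_def, intro allI impI)
    fix i j :: nat assume ij: "i < Suc M" "j < Suc M"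
    show "(X2 * Y2 * Err a M) $ i $ j = (0::T) $ i $ j"
    proof (cases "i = 0 \<or> j = 0")
      case True
      then show ?thesis by (simp add: XY_nth)
    next
      case False
      then have "i - 1 < M \<and> j - 1 < M" using ij by auto
      then show ?thesis using E[of "i - 1" "j - 1"] False by (simp add: XY_nth)
    qed
  qed
qed

lemma AM_eqv: "eqv (Suc M) (inU (AM a M)) (inU Hser)"
  by (rule inU_eqv) (simp add: AM_def lessThan_Suc_atMost factA Hser_nth)

lemma F_eqv: "eqv (Suc M) ((X2 + Y2) * SM a M) (X2 * Y2 * (inU Hser * inV (BM a M) - 1))"
proof -
  have "eqv (Suc M) (X2 * Y2 * ((inU (AM a M) * inV (BM a M) - 1) - Err a M))
      (X2 * Y2 * (inU Hser * inV (BM a M) - 1) - 0)"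
    unfolding right_diff_distrib[of "X2 * Y2"]
    by (intro eqv_diff Err_small eqv_mult eqv_refl AM_eqv)
  then show ?thesis by (simp add: EI)
qed

lemma factB: "n + 2 \<le> M \<Longrightarrow> BM a M $ n = Eser $ n"
proof -
  assume nM: "n + 2 \<le> M"
  let ?B = "BM a M"
  have z: "(fps_X ^ 2 * (negf Hser * ?B - 1)) $ N = 0" if "N \<le> M" for N
  proof -
    have "sig N ((X2 + Y2) * SM a M) = 0" by (rule sig_XY)
    then have "sig N (X2 * Y2 * (inU Hser * inV ?B - 1)) = 0"
      using sig_eqv[OF F_eqv, of N] that by simp
    moreover have "X2 * Y2 * (inU Hser * inV ?B - 1) = inU (fps_X * Hser) * inV (fps_X * ?B) - inU fps_X * inV fps_X"
      by (simp add: inU_mult inV_mult inU_X inV_X algebra_simps)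
    ultimately have "(negf (fps_X * Hser) * (fps_X * ?B)) $ N - (negf fps_X * fps_X) $ N = 0"
      by (simp add: sig_diff sig_UV)
    moreover have "negf (fps_X * Hser) * (fps_X * ?B) - negf fps_X * fps_X = - (fps_X^2 * (negf Hser * ?B - 1))"
      by (simp only: negf_X_mult negf_X) (simp add: power2_eq_square algebra_simps)
    ultimately show ?thesis
      by (metis fps_sub_nth fps_neg_nth neg_equal_0_iff_equal)
  qed
  have low: "\<forall>k\<le>n. (negf Hser * ?B - 1) $ k = 0"
  proof (intro allI impI)
    fix k assume "k \<le> n"
    then have "(fps_X ^ 2 * (negf Hser * ?B - 1)) $ (k + 2) = 0" using z nM by simp
    then show "(negf Hser * ?B - 1) $ k = 0" by (simp add: fps_X_power_mult_nth)
  qed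
  have "?B = Eser * (negf Hser * ?B)" using Hn_Eser by (simp add: mult_ac)
  also have "\<dots> = Eser + Eser * (negf Hser * ?B - 1)" by (simp add: algebra_simps)
  finally have eqB: "?B = Eser + Eser * (negf Hser * ?B - 1)" .
  have "?B $ n = (Eser + Eser * (negf Hser * ?B - 1)) $ n"
    using eqB by (rule arg_cong)
  also have "\<dots> = Eser $ n + (Eser * (negf Hser * ?B - 1)) $ n" by (simp only: fps_add_nth)
  also have "(Eser * (negf Hser * ?B - 1)) $ n = 0"
    by (rule mult_low_zero[OF low order.refl])
  finally show ?thesis by simp
qed

end

context fixes a :: "int \<Rightarrow> complex" begin

lemma hook_term_nth: "hook_term a (p, q) $ (i::nat) $ (j::nat) = sh p q a * Uk (Suc p) a $ i * Uk (Suc q) (dual a) $ j"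
  by (simp add: hook_term_Wd cc_nth Wd_def inUV_nth mult.assoc)

lemma hook_term_zero: "\<not> (p < i \<and> q < j) \<Longrightarrow> hook_term a (p, q) $ (i::nat) $ (j::nat) = 0"
  by (auto simp: hook_term_nth Uk_nth_low)

lemma fsum2_nth: "fsum2 T $ (i::nat) $ (j::nat) = Sum_any (\<lambda>pq. T pq $ i $ j)"
  by (simp add: fsum2_def)

lemma S_SM: "(i::nat) \<le> M \<Longrightarrow> j \<le> M \<Longrightarrow> fsum2 (hook_term a) $ i $ j = SM a M $ i $ j"
proof -
  assume ij: "i \<le> M" "j \<le> M"
  have "fsum2 (hook_term a) $ i $ j = Sum_any (\<lambda>pq. hook_term a pq $ i $ j)" by (rule fsum2_nth)
  also have "\<dots> = (\<Sum>pq\<in>{..<M} \<times> {..<M}. hook_term a pq $ i $ j)"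
  proof (rule Sum_any.expand_superset)
    show "{pq. hook_term a pq $ i $ j \<noteq> 0} \<subseteq> {..<M} \<times> {..<M}"
    proof
      fix pq assume "pq \<in> {pq. hook_term a pq $ i $ j \<noteq> 0}"
      moreover obtain p q where pq: "pq = (p, q)" by (cases pq)
      ultimately have "p < i \<and> q < j" using hook_term_zero by auto
      then show "pq \<in> {..<M} \<times> {..<M}" using ij pq by auto
    qed
  qed simp
  also have "\<dots> = (\<Sum>p<M. \<Sum>q<M. hook_term a (p, q) $ i $ j)"
    by (simp add: sum.cartesian_product)
  also have "\<dots> = SM a M $ i $ j" by (simp add: SM_def fps_sum_nth)
  finally show ?thesis .
qed

lemma S_zero: "(i::nat) = 0 \<or> (j::nat) = 0 \<Longrightarrow> fsum2 (hook_term a) $ i $ j = 0"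
  using S_SM[of i "max i j" j] by (auto simp: SM_def fps_sum_nth hook_term_zero intro!: sum.neutral)

lemma main_eq: "(X2 + Y2) * fsum2 (hook_term a) = X2 * Y2 * (inU Hser * inV Eser - 1)"
proof (rule fps_ext, rule fps_ext)
  fix i j :: nat
  let ?S = "fsum2 (hook_term a)"
  define N where "N = Suc (max i j)"
  define M where "M = N + 2"
  have e1: "eqv (Suc M) ?S (SM a M)"
    unfolding eqv_def using S_SM by auto
  have e2: "eqv N ((X2 + Y2) * ?S) ((X2 + Y2) * SM a M)"
    by (rule eqv_mono[OF eqv_mult[OF eqv_refl e1]]) (simp add: M_def)
  have e3: "eqv N ((X2 + Y2) * SM a M) (X2 * Y2 * (inU Hser * inV (BM a M) - 1))"
    by (rule eqv_mono[OF F_eqv]) (simp add: M_def)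
  have e4: "eqv N (X2 * Y2 * (inU Hser * inV (BM a M) - 1)) (X2 * Y2 * (inU Hser * inV Eser - 1))"
    by (intro eqv_mult eqv_diff eqv_refl inV_eqv factB) (simp add: M_def)
  have "eqv N ((X2 + Y2) * ?S) (X2 * Y2 * (inU Hser * inV Eser - 1))"
    using eqv_trans[OF e2 eqv_trans[OF e3 e4]] .
  moreover have "i < N" "j < N" by (simp_all add: N_def)
  ultimately show "((X2 + Y2) * ?S) $ i $ j = (X2 * Y2 * (inU Hser * inV Eser - 1)) $ i $ j"
    by (simp add: eqv_def)
qed

lemma XY_cancel: "X2 * Y2 * F = X2 * Y2 * G \<Longrightarrow> F = G"
proof (rule fps_ext, rule fps_ext)
  fix i j :: nat assume "X2 * Y2 * F = X2 * Y2 * G"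
  then have "(X2 * Y2 * F) $ Suc i $ Suc j = (X2 * Y2 * G) $ Suc i $ Suc j"
    by (rule arg_cong[where f="\<lambda>H::T. H $ Suc i $ Suc j"])
  then show "F $ i $ j = G $ i $ j" by (simp add: XY_nth)
qed

definition Sx :: T where "Sx = Abs_fps (\<lambda>m. fsum2 (hook_term a) $ Suc m)"
definition Sy :: T where "Sy = Abs_fps (\<lambda>m. Abs_fps (\<lambda>n. fsum2 (hook_term a) $ m $ Suc n))"

lemma S_Sx: "fsum2 (hook_term a) = X2 * Sx"
proof (rule fps_ext, rule fps_ext)
  fix i j :: nat show "fsum2 (hook_term a) $ i $ j = (X2 * Sx) $ i $ j"
    by (cases i) (simp_all add: X2_def Sx_def S_zero)
qed

lemma S_Sy: "fsum2 (hook_term a) = Y2 * Sy"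
proof (rule fps_ext, rule fps_ext)
  fix i j :: nat show "fsum2 (hook_term a) $ i $ j = (Y2 * Sy) $ i $ j"
    by (cases j) (simp_all add: Y2_def Sy_def S_zero)
qed

lemma pre_final: "1 + Sx + Sy = inU Hser * inV Eser"
proof (rule XY_cancel)
  have "X2 * Y2 * (1 + Sx + Sy) = X2 * Y2 + Y2 * (X2 * Sx) + X2 * (Y2 * Sy)"
    by (simp add: algebra_simps)
  also have "\<dots> = X2 * Y2 + (X2 + Y2) * fsum2 (hook_term a)"
    by (simp add: S_Sx[symmetric] S_Sy[symmetric] algebra_simps)
  also have "\<dots> = X2 * Y2 + X2 * Y2 * (inU Hser * inV Eser - 1)"
    by (simp only: main_eq)
  also have "\<dots> = X2 * Y2 * (inU Hser * inV Eser)"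
    by (simp add: algebra_simps)
  finally show "X2 * Y2 * (1 + Sx + Sy) = X2 * Y2 * (inU Hser * inV Eser)" .
qed

end

definition mapc :: "sym fps fps \<Rightarrow> sym fls fps" where
  "mapc F = Abs_fps (\<lambda>m. fps_to_fls (F $ m))"

lemma emb2_mapc: "emb2 F = fps_to_fls (mapc F)" by (simp add: emb2_def mapc_def)

lemma fps_to_fls_sum: "fps_to_fls (sum f A) = (\<Sum>x\<in>A. fps_to_fls (f x))"
  by (induct A rule: infinite_finite_induct) simp_all

lemma mapc_mult: "mapc (F * G) = mapc F * mapc G"
  by (rule fps_ext) (simp add: mapc_def fps_mult_nth fps_to_fls_sum fls_times_fps_to_fls)

lemma mapc_add: "mapc (F + G) = mapc F + mapc G"
  by (rule fps_ext) (simp add: mapc_def)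

lemma mapc_one: "mapc 1 = 1"
proof (rule fps_ext)
  fix n show "mapc 1 $ n = (1 :: sym fls fps) $ n" by (cases n) (simp_all add: mapc_def)
qed

lemma mapc_X: "mapc X2 = fps_X"
proof (rule fps_ext)
  fix n show "mapc X2 $ n = (fps_X :: sym fls fps) $ n" by (simp add: mapc_def X2_def fps_X_def)
qed

lemma mapc_Y: "mapc Y2 = fps_const fls_X"
proof (rule fps_ext)
  fix n show "mapc Y2 $ n = fps_const fls_X $ n" by (cases n) (simp_all add: mapc_def Y2_def)
qed

lemma emb2_mult: "emb2 (F * G) = emb2 F * emb2 G"
  by (simp add: emb2_mapc mapc_mult fls_times_fps_to_fls)
lemma emb2_add: "emb2 (F + G) = emb2 F + emb2 G"
  by (simp add: emb2_mapc mapc_add)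
lemma emb2_one: "emb2 1 = 1"
  by (simp add: emb2_mapc mapc_one)

lemma uvar_X: "uvar * emb2 X2 = 1"
  by (simp add: uvar_def emb2_mapc mapc_X fls_X_inv_times_conv_shift)

lemma vvar_Y: "vvar * emb2 Y2 = 1"
  by (simp add: vvar_def emb2_mapc mapc_Y fls_X_inv_times_conv_shift)

theorem theorem6:
  fixes a :: "int \<Rightarrow> complex"
  shows "1 + (uvar + vvar) * emb2 (fsum2 (hook_term a))
         = emb2 (inU Hser) * emb2 (inV Eser)"
proof -
  have "(uvar + vvar) * emb2 (fsum2 (hook_term a))
      = uvar * emb2 (fsum2 (hook_term a)) + vvar * emb2 (fsum2 (hook_term a))"
    by (simp add: algebra_simps)
  also have "uvar * emb2 (fsum2 (hook_term a)) = emb2 (Sx a)"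
    by (subst S_Sx) (simp add: emb2_mult mult.assoc[symmetric] uvar_X)
  also have "vvar * emb2 (fsum2 (hook_term a)) = emb2 (Sy a)"
    by (subst S_Sy) (simp add: emb2_mult mult.assoc[symmetric] vvar_Y)
  finally have "1 + (uvar + vvar) * emb2 (fsum2 (hook_term a)) = emb2 (1 + Sx a + Sy a)"
    by (simp add: emb2_add emb2_one add.assoc)
  also have "\<dots> = emb2 (inU Hser * inV Eser)" by (simp add: pre_final)
  finally show ?thesis by (simp add: emb2_mult)
qed


end
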